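(* Let $\varphi:X\to\mathbb R$ be Lipschitz continuous, let $u:X\to\mathbb R$ be a calibrated subaction of $\varphi$ and $\underline{y}^{(0)}\in X$. For each $n\ge1$ let $\underline{y}^{(-n)}$ be a point with $\sigma(\underline{y}^{(-n)})=\underline{y}^{(-n+1)}$ and $u(\underline{y}^{(-n+1)})=\varphi(\underline{y}^{(-n)})+u(\underline{y}^{(-n)})-\alpha_\varphi$. Then every accumulation point of $\{\underline{y}^{(-n)}\}_{n\ge1}$ belongs to $\Omega_\varphi$.
   Context: $X=[0,1]^{\mathbb N_0}$ with metric $d_X(\underline{x},\underline{y})=\sum_{i\ge0}|x_i-y_i|/2^{i+1}$ and shift $\sigma(\underline{x})_i=x_{i+1}$. $\alpha_\varphi=\inf_\mu\int\varphi\,d\mu$ over $\sigma$-invariant Borel probability measures. $B(\underline{x},\underline{y},n;\varepsilon)=\{\underline{z}: d_X(\underline{x},\underline{z})<\varepsilon,\ d_X(\sigma^n\underline{z},\underline{y})<\varepsilon\}$. Mañé potential $S_\varphi(\underline{x},\underline{y})=\lim_{\varepsilon\to0}\inf\{\sum_{i=0}^{n-1}(\varphi(\sigma^i\underline{z})-\alpha_\varphi): n\in\mathbb N,\ \underline{z}\in B(\underline{x},\underline{y},n;\varepsilon)\}$; Aubry set $\Omega_\varphi=\{\underline{x}: S_\varphi(\underline{x},\underline{x})=0\}$. A subaction is a continuous $u$ with $u(\underline{x})+\varphi(\underline{x})\ge u(\sigma\underline{x})+\alpha_\varphi$ for all $\underline{x}$; it is calibrated if $\min_{\sigma(\underline{y})=\underline{x}}(\varphi(\underline{y})+u(\underline{y}))=u(\underline{x})+\alpha_\varphi$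 for every $\underline{x}$. *)

theory Defs
  imports "HOL-Probability.Probability"
begin

definition XX :: "(nat \<Rightarrow> real) set" where
  "XX = {x. \<forall>i. 0 \<le> x i \<and> x i \<le> 1}"

definition dX :: "(nat \<Rightarrow> real) \<Rightarrow> (nat \<Rightarrow> real) \<Rightarrow> real" where
  "dX x y = (\<Sum>i. \<bar>x i - y i\<bar> / 2 ^ (i + 1))"

definition shift :: "(nat \<Rightarrow> real) \<Rightarrow> (nat \<Rightarrow> real)" where
  "shift x = (\<lambda>i. x (Suc i))"

text \<open>Borel probability measures on X (Borel sets of the product topology restricted
  to X, which coincides with the topology of dX on X) that are shift-invariant.\<close>
definition invariant_prob :: "(nat \<Rightarrow> real) measure \<Rightarrow> bool" where
  "invariant_prob M \<longleftrightarrow> prob_space M \<and> sets M = sets (restrict_space borel XX) \<and>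
     (\<forall>A \<in> sets M. emeasure M (shift -` A \<inter> XX) = emeasure M A)"

definition alpha :: "((nat \<Rightarrow> real) \<Rightarrow> real) \<Rightarrow> real" where
  "alpha \<phi> = Inf {integral\<^sup>L M \<phi> | M. invariant_prob M}"

definition Bset :: "(nat \<Rightarrow> real) \<Rightarrow> (nat \<Rightarrow> real) \<Rightarrow> nat \<Rightarrow> real \<Rightarrow> (nat \<Rightarrow> real) set" where
  "Bset x y n \<epsilon> = {z \<in> XX. dX x z < \<epsilon> \<and> dX ((shift ^^ n) z) y < \<epsilon>}"

definition mane :: "((nat \<Rightarrow> real) \<Rightarrow> real) \<Rightarrow> (nat \<Rightarrow> real) \<Rightarrow> (nat \<Rightarrow> real) \<Rightarrow> ereal" where
  "mane \<phi> x y = Lim (at_right (0::real))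
     (\<lambda>\<epsilon>. Inf {ereal (\<Sum>i<n. \<phi> ((shift ^^ i) z) - alpha \<phi>) | n z. n \<ge> 1 \<and> z \<in> Bset x y n \<epsilon>})"

definition aubry :: "((nat \<Rightarrow> real) \<Rightarrow> real) \<Rightarrow> (nat \<Rightarrow> real) set" where
  "aubry \<phi> = {x \<in> XX. mane \<phi> x x = 0}"

definition continuous_X :: "((nat \<Rightarrow> real) \<Rightarrow> real) \<Rightarrow> bool" where
  "continuous_X u \<longleftrightarrow> (\<forall>x\<in>XX. \<forall>e>0. \<exists>\<delta>>0. \<forall>y\<in>XX. dX x y < \<delta> \<longrightarrow> \<bar>u y - u x\<bar> < e)"

definition lipschitz_X :: "((nat \<Rightarrow> real) \<Rightarrow> real) \<Rightarrow> bool" where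
  "lipschitz_X \<phi> \<longleftrightarrow> (\<exists>L. \<forall>x\<in>XX. \<forall>y\<in>XX. \<bar>\<phi> x - \<phi> y\<bar> \<le> L * dX x y)"

definition subaction :: "((nat \<Rightarrow> real) \<Rightarrow> real) \<Rightarrow> ((nat \<Rightarrow> real) \<Rightarrow> real) \<Rightarrow> bool" where
  "subaction \<phi> u \<longleftrightarrow> continuous_X u \<and>
     (\<forall>x\<in>XX. u x + \<phi> x \<ge> u (shift x) + alpha \<phi>)"

definition calibrated :: "((nat \<Rightarrow> real) \<Rightarrow> real) \<Rightarrow> ((nat \<Rightarrow> real) \<Rightarrow> real) \<Rightarrow> bool" where
  "calibrated \<phi> u \<longleftrightarrow> subaction \<phi> u \<and>
     (\<forall>x\<in>XX. (\<exists>y\<in>XX. shift y = x \<and> \<phi> y + u y = u x + alpha \<phi>) \<and>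
              (\<forall>y\<in>XX. shift y = x \<longrightarrow> \<phi> y + u y \<ge> u x + alpha \<phi>))"

definition accumulation_point :: "(nat \<Rightarrow> (nat \<Rightarrow> real)) \<Rightarrow> (nat \<Rightarrow> real) \<Rightarrow> bool" where
  "accumulation_point ys p \<longleftrightarrow> p \<in> XX \<and> (\<forall>e>0. \<forall>N. \<exists>n\<ge>N. dX (ys n) p < e)"

end

theory Submission
  imports Defs
begin

lemma dX_sym: "dX x y = dX y x"
  unfolding dX_def by (simp add: abs_minus_commute)

lemma shift_XX: "x \<in> XX \<Longrightarrow> shift x \<in> XX"
  unfolding XX_def shift_def by auto

lemma funpow_shift_XX: "x \<in> XX \<Longrightarrow> (shift ^^ n) x \<in> XX"
  by (induction n) (auto simp: shift_XX)

lemma ereal_tendsto_0_aux: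
  assumes "\<And>c. c > 0 \<Longrightarrow> eventually (\<lambda>x. ereal (-c) \<le> f x \<and> f x \<le> ereal c) F"
  shows "(f \<longlongrightarrow> (0::ereal)) F"
proof (rule order_tendstoI)
  fix a :: ereal assume "a < 0"
  then obtain c where c: "c > 0" "a < ereal (-c)"
  proof (cases a)
    case (real r) then show ?thesis using that[of "-r/2"] \<open>a < 0\<close> by auto
  next
    case MInf then show ?thesis using that[of 1] by auto
  qed (use \<open>a < 0\<close> in auto)
  show "eventually (\<lambda>x. a < f x) F"
    using assms[OF c(1)] by eventually_elim (use c in auto)
next
  fix a :: ereal assume "a > 0"
  then obtain c where c: "c > 0" "ereal c < a"
  proof (cases a)
    case (real r) then show ?thesis using that[of "r/2"] \<open>a > 0\<close> by auto
  next
    case PInf then show ?thesis using that[of 1] by auto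
  qed (use \<open>a > 0\<close> in auto)
  show "eventually (\<lambda>x. f x < a) F"
    using assms[OF c(1)] by eventually_elim (use c in auto)
qed

theorem lemma2p13:
  fixes \<phi> u :: "(nat \<Rightarrow> real) \<Rightarrow> real" and ys :: "nat \<Rightarrow> (nat \<Rightarrow> real)"
  assumes "lipschitz_X \<phi>"
    and "calibrated \<phi> u"
    and "\<forall>n. ys n \<in> XX"
    and "\<forall>n\<ge>1. shift (ys n) = ys (n - 1) \<and>
            u (ys (n - 1)) = \<phi> (ys n) + u (ys n) - alpha \<phi>"
    and "accumulation_point (\<lambda>n. ys (n + 1)) p"
  shows "p \<in> aubry \<phi>"
proof -
  have pX: "p \<in> XX" using assms(5) unfolding accumulation_point_def by auto
  have sub: "\<forall>x\<in>XX. u x + \<phi> x \<ge> u (shift x) + alpha \<phi>" and cont: "continuous_X u"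
    using assms(2) unfolding calibrated_def subaction_def by auto
  have contp: "\<exists>\<delta>>0. \<forall>y\<in>XX. dX p y < \<delta> \<longrightarrow> \<bar>u y - u p\<bar> < e" if "e > 0" for e
    using cont pX that unfolding continuous_X_def by blast
  have lower: "(\<Sum>i<n. \<phi> ((shift ^^ i) z) - alpha \<phi>) \<ge> u ((shift ^^ n) z) - u z"
    if "z \<in> XX" for z n
  proof (induction n)
    case (Suc n)
    have "(shift ^^ n) z \<in> XX" using funpow_shift_XX that by auto
    then have "u ((shift ^^ n) z) + \<phi> ((shift ^^ n) z) \<ge> u (shift ((shift ^^ n) z)) + alpha \<phi>"
      using sub by auto
    then show ?case using Suc by simp
  qed simp
  have iter: "(shift ^^ i) (ys n) = ys (n - i)" if "i \<le> n" for i n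
    using that
  proof (induction i)
    case (Suc i)
    then have "n - i \<ge> 1" by auto
    then have "shift (ys (n - i)) = ys (n - i - 1)" using assms(4) by auto
    then show ?case using Suc by simp
  qed simp
  have tele: "(\<Sum>i<k. \<phi> ((shift ^^ i) (ys n)) - alpha \<phi>) = u (ys (n - k)) - u (ys n)"
    if "k \<le> n" for k n
    using that
  proof (induction k)
    case (Suc k)
    then have "n - k \<ge> 1" by auto
    then have e0: "u (ys (n - k - 1)) = \<phi> (ys (n - k)) + u (ys (n - k)) - alpha \<phi>"
      using assms(4) by auto
    have h: "n - Suc k = n - k - 1" by simp
    have e1: "u (ys (n - Suc k)) = \<phi> (ys (n - k)) + u (ys (n - k)) - alpha \<phi>"
      unfolding h by (rule e0)
    have e2: "(shift ^^ k) (ys n) = ys (n - k)" using iter Suc by auto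
    have e3: "(\<Sum>i<Suc k. \<phi> ((shift ^^ i) (ys n)) - alpha \<phi>) =
      (\<Sum>i<k. \<phi> ((shift ^^ i) (ys n)) - alpha \<phi>) + (\<phi> ((shift ^^ k) (ys n)) - alpha \<phi>)"
      by (rule sum.lessThan_Suc)
    have "(\<Sum>i<k. \<phi> ((shift ^^ i) (ys n)) - alpha \<phi>) = u (ys (n - k)) - u (ys n)"
      using Suc by auto
    moreover have e4: "\<phi> ((shift ^^ k) (ys n)) = \<phi> (ys (n - k))" by (simp only: e2)
    ultimately show ?case using e1 e3 by linarith
  qed simp
  define S where "S \<epsilon> = {ereal (\<Sum>i<n. \<phi> ((shift ^^ i) z) - alpha \<phi>) | n z. n \<ge> 1 \<and> z \<in> Bset p p n \<epsilon>}" for \<epsilon>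
  have "((\<lambda>\<epsilon>. Inf (S \<epsilon>)) \<longlongrightarrow> 0) (at_right (0::real))"
  proof (rule ereal_tendsto_0_aux)
    fix c :: real assume c: "c > 0"
    obtain \<delta> where d: "\<delta> > 0" "\<forall>y\<in>XX. dX p y < \<delta> \<longrightarrow> \<bar>u y - u p\<bar> < c/2"
      using contp[of "c/2"] c by auto
    have up: "Inf (S \<epsilon>) \<le> ereal c" if "\<epsilon> > 0" for \<epsilon>
    proof -
      define r where "r = min \<epsilon> \<delta>"
      have r: "r > 0" using d that unfolding r_def by auto
      obtain m0 where m0: "dX (ys (m0 + 1)) p < r"
        using assms(5) r unfolding accumulation_point_def by blast
      obtain n0 where n0: "n0 \<ge> m0 + 1" "dX (ys (n0 + 1)) p < r"
        using assms(5) r unfolding accumulation_point_def by blast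
      define m where "m = m0 + 1"
      define n where "n = n0 + 1"
      define k where "k = n - m"
      have k: "k \<ge> 1" "k \<le> n" "n - k = m" unfolding k_def m_def n_def using n0 by auto
      have mm: "dX p (ys m) < r" using m0 dX_sym unfolding m_def by metis
      have nn: "dX p (ys n) < r" using n0 dX_sym unfolding n_def by metis
      have "ys n \<in> Bset p p k \<epsilon>"
        unfolding Bset_def using assms(3) iter[of k n] k mm nn dX_sym[of p]
        unfolding r_def by auto
      then have mem: "ereal (u (ys m) - u (ys n)) \<in> S \<epsilon>"
        unfolding S_def using tele[of k n] k by force
      have "\<bar>u (ys m) - u p\<bar> < c/2" "\<bar>u (ys n) - u p\<bar> < c/2"
        using d mm nn assms(3) unfolding r_def by auto
      then have "u (ys m) - u (ys n) \<le> c" by linarith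
      then show ?thesis using mem by (meson Inf_lower2 ereal_less_eq(3))
    qed
    have lo: "ereal (-c) \<le> Inf (S \<epsilon>)" if "\<epsilon> > 0" "\<epsilon> < \<delta>" for \<epsilon>
    proof (rule Inf_greatest)
      fix x assume "x \<in> S \<epsilon>"
      then obtain n z where nz: "x = ereal (\<Sum>i<n. \<phi> ((shift ^^ i) z) - alpha \<phi>)"
        "z \<in> Bset p p n \<epsilon>" unfolding S_def by auto
      have z: "z \<in> XX" "dX p z < \<delta>" "dX p ((shift ^^ n) z) < \<delta>"
        using nz(2) that dX_sym[of p] unfolding Bset_def by auto
      have "\<bar>u z - u p\<bar> < c/2" "\<bar>u ((shift ^^ n) z) - u p\<bar> < c/2"
        using d z funpow_shift_XX by auto
      moreover have "(\<Sum>i<n. \<phi> ((shift ^^ i) z) - alpha \<phi>) \<ge> u ((shift ^^ n) z) - u z"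
        using lower z by auto
      ultimately have "-c \<le> (\<Sum>i<n. \<phi> ((shift ^^ i) z) - alpha \<phi>)" by linarith
      then show "ereal (-c) \<le> x" using nz(1) by simp
    qed
    show "eventually (\<lambda>\<epsilon>. ereal (-c) \<le> Inf (S \<epsilon>) \<and> Inf (S \<epsilon>) \<le> ereal c) (at_right 0)"
      unfolding eventually_at_right_field using d up lo by (intro exI[of _ \<delta>]) auto
  qed
  then have "Lim (at_right (0::real)) (\<lambda>\<epsilon>. Inf (S \<epsilon>)) = 0"
    by (rule tendsto_Lim[rotated]) simp
  then have "mane \<phi> p p = 0" unfolding mane_def S_def by simp
  then show ?thesis using pX unfolding aubry_def by auto
qed

end
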